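(* Let $\xi$ be an integrable random variable, $M\in\mathcal M$, $I\in\mathcal N$ and $t\ge0$ (resp. $t>0$ for the second identity). Then, under the convention $0/0:=0$, almost surely $$\mathbb I^M_t\,\mathbb E[\xi\mid\mathcal G_t\vee\sigma(R_I)]=\mathbb I^M_t\,\frac{\mathbb E_{M,R_I}[\xi\,\mathbb I^M_t]}{\mathbb E_{M,R_I}[\mathbb I^M_t]},\qquad \mathbb I^M_{t-}\,\mathbb E[\xi\mid\mathcal G^-_t\vee\sigma(R_I)]=\mathbb I^M_{t-}\,\frac{\mathbb E_{M,R_I}[\xi\,\mathbb I^M_{t-}]}{\mathbb E_{M,R_I}[\mathbb I^M_{t-}]}.$$ (For $I=\emptyset$, $\sigma(R_I)$ is the trivial $\sigma$-algebra.)
   Context: Standing framework. Let $(\Omega,\mathcal A,P)$ be a complete probability space where $\Omega$ is a Polish space and $\mathcal A$ its Borel $\sigma$-algebra; let $\mathcal Z\subset\mathcal A$ denote the family of $P$-null sets. Let $E$ be a separable complete metric space with Borel $\sigma$-algebra $\mathcal E$. Let $T_i:\Omega\to[0,\infty]$ and $Z_i:\Omega\to E$, $i\in\mathbb N$, be random variables such that for every $i\in\mathbb N$: $Z_{2i-1}=Z_{2i}$, $T_{2i-1}\le T_{2i}$, and $T_{2i-1}<T_{2i}$ on $\{T_{2i}<\infty\}$. Assume $\mathbb E[\sum_{i=1}^\infty\mathbf 1_{\{T_i\le t\}}]<\infty$ for all $t\ge0$. Let $\mathcal N$ be the set of finite subsets of $\mathbb N$ and $\mathcal M$ the set of finite subsets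 of $\{1,3,5,\dots\}$. For $I\in\mathcal N$ let $E_I=E^{|I|}$, $\mathcal E_I=\mathcal B(E_I)$, $Z_I=(Z_i)_{i\in I}$, and define the random counting measure $\mu_I$ on $[0,\infty)\times E_I$ by $\mu_I([0,t]\times B)=\mathbf 1_{\{t\ge T_i=T_j\ \forall i,j\in I\}\cap\{T_i\neq T_j\ \forall i\in I,\,j\notin I\}}\mathbf 1_{\{Z_I\in B\}}$, $t\ge0$, $B\in\mathcal E_I$. Let $Q_I=\sup\{t\ge0:\mu_I([0,t]\times E_I)=0\}$ and $R_I=(Q_I,Z_I)$. Information: $\mathcal G_t=\sigma\big(\{T_{2i-1}\le t<T_{2i}\}\cap\{Z_{2i}\in B\}:B\in\mathcal E,i\in\mathbb N\big)\vee\mathcal Z$ ($t\ge0$), $\mathcal G^-_t=\sigma\big(\{T_{2i-1}< t\le T_{2i}\}\cap\{Z_{2i}\in B\}:B\in\mathcal E,i\in\mathbb N\big)\vee\mathcal Z$ ($t>0$). For $M\in\mathcal M$: $A^M_t=\bigcap_{i\in M}\{T_i\le t<T_{i+1}\}\cap\bigcap_{i\text{ odd},\,i\notin M}(\Omega\setminus\{T_i\le t<T_{i+1}\})$, $A^M_{t-}$ defined in the same way with $\{T_i<t\le T_{i+1}\}$ in place of $\{T_i\le t<T_{i+1}\}$, $\mathbb I^M_t=\mathbf 1_{A^M_t}$, $\mathbb I^M_{t-}=\mathbf 1_{A^M_{t-}}$. Conditional distributions: for $M\in\mathcal M$, $I\in\mathcal N$, $P_{M,R_I}$ is a fixed regular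 version of $P(\cdot\mid Z_M,R_I)$ and $\mathbb E_{M,R_I}[\xi]=\int\xi\,dP_{M,R_I}$; $P_M:=P_{M,R_\emptyset}$ (a version of $P(\cdot\mid Z_M)$) and $\mathbb E_M$ its expectation. *)

theory Defs
  imports "HOL-Probability.Probability"
begin

text \<open>Indices are 1-based as in the paper: the index set \<open>\<nat>\<close> of the paper is
  \<open>{1..}\<close>; the values of \<open>T 0\<close>, \<open>Z 0\<close> are never used.\<close>

definition idxN :: "nat set set" where
  "idxN = {I. finite I \<and> 0 \<notin> I}"

definition idxM :: "nat set set" where
  "idxM = {M. finite M \<and> M \<subseteq> {i. odd i}}"

definition ZI :: "(nat \<Rightarrow> 'w \<Rightarrow> 'e) \<Rightarrow> nat set \<Rightarrow> 'w \<Rightarrow> (nat \<Rightarrow> 'e)" where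
  "ZI Z I \<omega> = restrict (\<lambda>i. Z i \<omega>) I"

definition EI :: "nat set \<Rightarrow> (nat \<Rightarrow> 'e::topological_space) measure" where
  "EI I = PiM I (\<lambda>_. borel)"

text \<open>The random counting measure on rectangles:
  \<open>\<mu>_I([0,t] \<times> B)\<close>.\<close>
definition muI :: "(nat \<Rightarrow> 'w \<Rightarrow> ennreal) \<Rightarrow> (nat \<Rightarrow> 'w \<Rightarrow> 'e) \<Rightarrow> nat set
    \<Rightarrow> 'w \<Rightarrow> real \<Rightarrow> (nat \<Rightarrow> 'e) set \<Rightarrow> real" where
  "muI T Z I \<omega> t B =
     (if (\<forall>i\<in>I. \<forall>j\<in>I. T i \<omega> \<le> ennreal t \<and> T i \<omega> = T j \<omega>)
       \<and> (\<forall>i\<in>I. \<forall>j. 1 \<le> j \<and> j \<notin> I \<longrightarrow> T i \<omega> \<noteq> T j \<omega>)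
       \<and> ZI Z I \<omega> \<in> B then 1 else 0)"

definition QI :: "(nat \<Rightarrow> 'w \<Rightarrow> ennreal) \<Rightarrow> (nat \<Rightarrow> 'w \<Rightarrow> 'e::topological_space) \<Rightarrow> nat set
    \<Rightarrow> 'w \<Rightarrow> ennreal" where
  "QI T Z I \<omega> = Sup (ennreal ` {t. 0 \<le> t \<and> muI T Z I \<omega> t (space (EI I)) = 0})"

definition RI :: "(nat \<Rightarrow> 'w \<Rightarrow> ennreal) \<Rightarrow> (nat \<Rightarrow> 'w \<Rightarrow> 'e::topological_space) \<Rightarrow> nat set
    \<Rightarrow> 'w \<Rightarrow> ennreal \<times> (nat \<Rightarrow> 'e)" where
  "RI T Z I \<omega> = (QI T Z I \<omega>, ZI Z I \<omega>)"

definition RI_space :: "nat set \<Rightarrow> (ennreal \<times> (nat \<Rightarrow> 'e::topological_space)) measure" where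
  "RI_space I = borel \<Otimes>\<^sub>M EI I"

definition sigmaRV :: "'w measure \<Rightarrow> ('w \<Rightarrow> 'b) \<Rightarrow> 'b measure \<Rightarrow> 'w measure" where
  "sigmaRV P X N = vimage_algebra (space P) X N"

definition Gt_gen :: "'w measure \<Rightarrow> (nat \<Rightarrow> 'w \<Rightarrow> ennreal) \<Rightarrow> (nat \<Rightarrow> 'w \<Rightarrow> 'e::topological_space)
    \<Rightarrow> real \<Rightarrow> 'w set set" where
  "Gt_gen P T Z t = {{\<omega> \<in> space P. T (2*i-1) \<omega> \<le> ennreal t \<and> ennreal t < T (2*i) \<omega> \<and> Z (2*i) \<omega> \<in> B}
       | i B. 1 \<le> i \<and> B \<in> sets (borel :: 'e measure)}"

definition Gtm_gen :: "'w measure \<Rightarrow> (nat \<Rightarrow> 'w \<Rightarrow> ennreal) \<Rightarrow> (nat \<Rightarrow> 'w \<Rightarrow> 'e::topological_space)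
    \<Rightarrow> real \<Rightarrow> 'w set set" where
  "Gtm_gen P T Z t = {{\<omega> \<in> space P. T (2*i-1) \<omega> < ennreal t \<and> ennreal t \<le> T (2*i) \<omega> \<and> Z (2*i) \<omega> \<in> B}
       | i B. 1 \<le> i \<and> B \<in> sets (borel :: 'e measure)}"

definition G_RI :: "'w measure \<Rightarrow> (nat \<Rightarrow> 'w \<Rightarrow> ennreal) \<Rightarrow> (nat \<Rightarrow> 'w \<Rightarrow> 'e::topological_space)
    \<Rightarrow> nat set \<Rightarrow> real \<Rightarrow> 'w measure" where
  "G_RI P T Z I t = sigma (space P)
     (Gt_gen P T Z t \<union> null_sets P \<union> sets (sigmaRV P (RI T Z I) (RI_space I)))"

definition Gm_RI :: "'w measure \<Rightarrow> (nat \<Rightarrow> 'w \<Rightarrow> ennreal) \<Rightarrow> (nat \<Rightarrow> 'w \<Rightarrow> 'e::topological_space)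
    \<Rightarrow> nat set \<Rightarrow> real \<Rightarrow> 'w measure" where
  "Gm_RI P T Z I t = sigma (space P)
     (Gtm_gen P T Z t \<union> null_sets P \<union> sets (sigmaRV P (RI T Z I) (RI_space I)))"

definition AM :: "'w measure \<Rightarrow> (nat \<Rightarrow> 'w \<Rightarrow> ennreal) \<Rightarrow> nat set \<Rightarrow> real \<Rightarrow> 'w set" where
  "AM P T M t = {\<omega> \<in> space P.
      (\<forall>i\<in>M. T i \<omega> \<le> ennreal t \<and> ennreal t < T (i+1) \<omega>) \<and>
      (\<forall>i. odd i \<and> i \<notin> M \<longrightarrow> \<not> (T i \<omega> \<le> ennreal t \<and> ennreal t < T (i+1) \<omega>))}"

definition AMm :: "'w measure \<Rightarrow> (nat \<Rightarrow> 'w \<Rightarrow> ennreal) \<Rightarrow> nat set \<Rightarrow> real \<Rightarrow> 'w set" where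
  "AMm P T M t = {\<omega> \<in> space P.
      (\<forall>i\<in>M. T i \<omega> < ennreal t \<and> ennreal t \<le> T (i+1) \<omega>) \<and>
      (\<forall>i. odd i \<and> i \<notin> M \<longrightarrow> \<not> (T i \<omega> < ennreal t \<and> ennreal t \<le> T (i+1) \<omega>))}"

definition regular_cond_prob :: "'w measure \<Rightarrow> ('w \<Rightarrow> 'b) \<Rightarrow> 'b measure \<Rightarrow> ('w \<Rightarrow> 'w measure) \<Rightarrow> bool" where
  "regular_cond_prob P X N K \<longleftrightarrow>
     (\<forall>\<omega>\<in>space P. prob_space (K \<omega>) \<and> sets (K \<omega>) = sets P) \<and>
     (\<forall>A\<in>sets P. (\<lambda>\<omega>. emeasure (K \<omega>) A) \<in> borel_measurable (sigmaRV P X N) \<and>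
        (\<forall>C\<in>sets (sigmaRV P X N).
           (\<integral>\<^sup>+\<omega>. emeasure (K \<omega>) A * indicator C \<omega> \<partial>P) = emeasure P (A \<inter> C)))"

definition ZM_RI :: "(nat \<Rightarrow> 'w \<Rightarrow> ennreal) \<Rightarrow> (nat \<Rightarrow> 'w \<Rightarrow> 'e::topological_space) \<Rightarrow> nat set \<Rightarrow> nat set
    \<Rightarrow> 'w \<Rightarrow> (nat \<Rightarrow> 'e) \<times> (ennreal \<times> (nat \<Rightarrow> 'e))" where
  "ZM_RI T Z M I \<omega> = (ZI Z M \<omega>, RI T Z I \<omega>)"

definition ZM_RI_space :: "nat set \<Rightarrow> nat set \<Rightarrow> ((nat \<Rightarrow> 'e::topological_space) \<times> (ennreal \<times> (nat \<Rightarrow> 'e))) measure" where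
  "ZM_RI_space M I = EI M \<Otimes>\<^sub>M RI_space I"

end

theory Submission
  imports Defs
begin



locale kern =
  fixes P0 H :: "'w measure" and K :: "'w \<Rightarrow> 'w measure"
  assumes P0: "prob_space P0"
  and spH: "space H = space P0" and setsH: "sets H \<subseteq> sets P0"
  and Kprob: "\<And>\<omega>. \<omega> \<in> space P0 \<Longrightarrow> prob_space (K \<omega>)"
  and Ksets: "\<And>\<omega>. \<omega> \<in> space P0 \<Longrightarrow> sets (K \<omega>) = sets P0"
  and Kmeas: "\<And>B. B \<in> sets P0 \<Longrightarrow> (\<lambda>\<omega>. emeasure (K \<omega>) B) \<in> borel_measurable H"
  and Kint: "\<And>B C. B \<in> sets P0 \<Longrightarrow> C \<in> sets H \<Longrightarrow>
     (\<integral>\<^sup>+\<omega>. emeasure (K \<omega>) B * indicator C \<omega> \<partial>P0) = emeasure P0 (B \<inter> C)"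
begin

lemma Kmeas_sub: "K \<in> measurable H (subprob_algebra P0)"
  by (rule measurable_subprob_algebra) (auto simp: spH Kprob Ksets prob_space_imp_subprob_space Kmeas)

lemma subalg: "subalgebra P0 H" using spH setsH by (simp add: subalgebra_def)

lemma KN_meas: "u \<in> borel_measurable P0 \<Longrightarrow> (\<lambda>\<omega>. \<integral>\<^sup>+x. u x \<partial>K \<omega>) \<in> borel_measurable H"
  using measurable_compose[OF Kmeas_sub nn_integral_measurable_subprob_algebra] by simp

lemma KL1:
  assumes u: "u \<in> borel_measurable P0" and C: "C \<in> sets H"
  shows "(\<integral>\<^sup>+\<omega>. (\<integral>\<^sup>+x. u x \<partial>K \<omega>) * indicator C \<omega> \<partial>P0) = (\<integral>\<^sup>+\<omega>. u \<omega> * indicator C \<omega> \<partial>P0)"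
proof -
  let ?R = "restr_to_subalg P0 H"
  let ?N = "density ?R (indicator C)"
  have setsN: "sets ?N = sets H" by (simp add: sets_restr_to_subalg[OF subalg])
  have spN: "space ?N = space P0" by (simp add: space_restr_to_subalg)
  have KN: "K \<in> measurable ?N (subprob_algebra P0)"
    using Kmeas_sub by (simp add: measurable_cong_sets[OF setsN refl])
  have ne: "space ?N \<noteq> {}" using spN prob_space.not_empty[OF P0] by simp
  have C0: "C \<in> sets P0" using C setsH by auto
  have CR: "indicator C \<in> borel_measurable ?R"
    using C by (simp add: measurable_cong_sets[OF sets_restr_to_subalg[OF subalg] refl])
  have eq: "?N \<bind> K = density P0 (indicator C)"
  proof (rule measure_eqI)
    show ss: "sets (?N \<bind> K) = sets (density P0 (indicator C))"
      using sets_bind_measurable[OF KN ne] by simp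
    fix B assume "B \<in> sets (?N \<bind> K)"
    then have B: "B \<in> sets P0" using ss by simp
    have m: "(\<lambda>\<omega>. emeasure (K \<omega>) B) \<in> borel_measurable ?R"
      using Kmeas[OF B] by (simp add: measurable_cong_sets[OF sets_restr_to_subalg[OF subalg] refl])
    have "emeasure (?N \<bind> K) B = (\<integral>\<^sup>+\<omega>. emeasure (K \<omega>) B \<partial>?N)"
      by (rule emeasure_bind[OF ne KN B])
    also have "\<dots> = (\<integral>\<^sup>+\<omega>. indicator C \<omega> * emeasure (K \<omega>) B \<partial>?R)"
      by (rule nn_integral_density[OF CR m])
    also have "\<dots> = (\<integral>\<^sup>+\<omega>. indicator C \<omega> * emeasure (K \<omega>) B \<partial>P0)"
      by (rule nn_integral_subalgebra2[OF subalg]) (use C Kmeas[OF B] in measurable)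
    also have "\<dots> = emeasure P0 (B \<inter> C)"
      using Kint[OF B C] by (simp add: mult.commute)
    also have "\<dots> = emeasure (density P0 (indicator C)) B"
    proof -
      have "emeasure (density P0 (indicator C)) B = (\<integral>\<^sup>+x. indicator C x * indicator B x \<partial>P0)"
        using B C0 by (simp add: emeasure_density)
      also have "\<dots> = (\<integral>\<^sup>+x. indicator (B \<inter> C) x \<partial>P0)"
        by (intro nn_integral_cong) (simp add: indicator_inter_arith mult.commute)
      also have "\<dots> = emeasure P0 (B \<inter> C)" using B C0 by simp
      finally show ?thesis by simp
    qed
    finally show "emeasure (?N \<bind> K) B = emeasure (density P0 (indicator C)) B" .
  qed
  have m2: "(\<lambda>\<omega>. \<integral>\<^sup>+x. u x \<partial>K \<omega>) \<in> borel_measurable ?R"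
    using KN_meas[OF u] by (simp add: measurable_cong_sets[OF sets_restr_to_subalg[OF subalg] refl])
  have "(\<integral>\<^sup>+\<omega>. u \<omega> * indicator C \<omega> \<partial>P0) = (\<integral>\<^sup>+\<omega>. indicator C \<omega> * u \<omega> \<partial>P0)"
    by (simp add: mult.commute)
  also have "\<dots> = (\<integral>\<^sup>+\<omega>. u \<omega> \<partial>density P0 (indicator C))"
    using C0 u by (simp add: nn_integral_density)
  also have "\<dots> = (\<integral>\<^sup>+\<omega>. u \<omega> \<partial>(?N \<bind> K))" using eq by simp
  also have "\<dots> = (\<integral>\<^sup>+\<omega>. (\<integral>\<^sup>+x. u x \<partial>K \<omega>) \<partial>?N)"
    by (rule nn_integral_bind[OF _ KN]) (use u in simp)
  also have "\<dots> = (\<integral>\<^sup>+\<omega>. indicator C \<omega> * (\<integral>\<^sup>+x. u x \<partial>K \<omega>) \<partial>?R)"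
    by (rule nn_integral_density[OF CR m2])
  also have "\<dots> = (\<integral>\<^sup>+\<omega>. indicator C \<omega> * (\<integral>\<^sup>+x. u x \<partial>K \<omega>) \<partial>P0)"
    by (rule nn_integral_subalgebra2[OF subalg]) (use C KN_meas[OF u] in measurable)
  finally show ?thesis by (simp add: mult.commute)
qed

lemma KL2:
  assumes u: "u \<in> borel_measurable P0" and phi: "\<phi> \<in> borel_measurable H"
  shows "(\<integral>\<^sup>+\<omega>. (\<integral>\<^sup>+x. u x \<partial>K \<omega>) * \<phi> \<omega> \<partial>P0) = (\<integral>\<^sup>+\<omega>. u \<omega> * \<phi> \<omega> \<partial>P0)"
  using phi
proof (induction rule: borel_measurable_induct)
  case (cong f g)
  then show ?case
    by (metis (no_types, lifting) nn_integral_cong spH)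
next
  case (set A)
  then show ?case using KL1[OF u] by simp
next
  case (mult v c)
  have [measurable]: "v \<in> borel_measurable P0" using mult(2) measurable_from_subalg[OF subalg] by blast
  have [measurable]: "(\<lambda>\<omega>. \<integral>\<^sup>+x. u x \<partial>K \<omega>) \<in> borel_measurable P0"
    using KN_meas[OF u] measurable_from_subalg[OF subalg] by blast
  have [measurable]: "u \<in> borel_measurable P0" by (rule u)
  have "(\<integral>\<^sup>+\<omega>. (\<integral>\<^sup>+x. u x \<partial>K \<omega>) * (c * v \<omega>) \<partial>P0) = (\<integral>\<^sup>+\<omega>. c * ((\<integral>\<^sup>+x. u x \<partial>K \<omega>) * v \<omega>) \<partial>P0)"
    by (simp add: mult_ac)
  also have "\<dots> = c * (\<integral>\<^sup>+\<omega>. (\<integral>\<^sup>+x. u x \<partial>K \<omega>) * v \<omega> \<partial>P0)"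
    by (rule nn_integral_cmult) measurable
  also have "\<dots> = c * (\<integral>\<^sup>+\<omega>. u \<omega> * v \<omega> \<partial>P0)" using mult by simp
  also have "\<dots> = (\<integral>\<^sup>+\<omega>. c * (u \<omega> * v \<omega>) \<partial>P0)"
    by (rule nn_integral_cmult[symmetric]) measurable
  also have "\<dots> = (\<integral>\<^sup>+\<omega>. u \<omega> * (c * v \<omega>) \<partial>P0)" by (simp add: mult_ac)
  finally show ?case .
next
  case (add v w)
  have mv: "v \<in> borel_measurable P0" "w \<in> borel_measurable P0"
    using add measurable_from_subalg[OF subalg] by blast+
  have mk: "(\<lambda>\<omega>. \<integral>\<^sup>+x. u x \<partial>K \<omega>) \<in> borel_measurable P0"
    using KN_meas[OF u] measurable_from_subalg[OF subalg] by blast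
  show ?case using add mv mk u
    by (simp add: distrib_left nn_integral_add)
next
  case (seq U)
  have mv[measurable]: "\<And>i. U i \<in> borel_measurable P0"
    using seq measurable_from_subalg[OF subalg] by blast
  have mk[measurable]: "(\<lambda>\<omega>. \<integral>\<^sup>+x. u x \<partial>K \<omega>) \<in> borel_measurable P0"
    using KN_meas[OF u] measurable_from_subalg[OF subalg] by blast
  have [measurable]: "u \<in> borel_measurable P0" by (rule u)
  have inc: "incseq U" using seq by blast
  have IH: "\<And>i. (\<integral>\<^sup>+\<omega>. (\<integral>\<^sup>+x. u x \<partial>K \<omega>) * U i \<omega> \<partial>P0) = (\<integral>\<^sup>+\<omega>. u \<omega> * U i \<omega> \<partial>P0)"
    using seq by blast
  have sa: "\<And>\<omega>. (SUP i. U i) \<omega> = (SUP i. U i \<omega>)" by (simp add: image_comp)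
  have "(\<integral>\<^sup>+\<omega>. (\<integral>\<^sup>+x. u x \<partial>K \<omega>) * (SUP i. U i) \<omega> \<partial>P0)
      = (\<integral>\<^sup>+\<omega>. (SUP i. (\<integral>\<^sup>+x. u x \<partial>K \<omega>) * U i \<omega>) \<partial>P0)"
    unfolding sa by (simp add: SUP_mult_left_ennreal)
  also have "\<dots> = (SUP i. \<integral>\<^sup>+\<omega>. (\<integral>\<^sup>+x. u x \<partial>K \<omega>) * U i \<omega> \<partial>P0)"
    by (rule nn_integral_monotone_convergence_SUP)
      (use inc in \<open>auto simp: incseq_def le_fun_def intro!: mult_left_mono\<close>)
  also have "\<dots> = (SUP i. \<integral>\<^sup>+\<omega>. u \<omega> * U i \<omega> \<partial>P0)" using IH by simp
  also have "\<dots> = (\<integral>\<^sup>+\<omega>. (SUP i. u \<omega> * U i \<omega>) \<partial>P0)"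
    by (rule nn_integral_monotone_convergence_SUP[symmetric])
      (use inc in \<open>auto simp: incseq_def le_fun_def intro!: mult_left_mono\<close>)
  also have "\<dots> = (\<integral>\<^sup>+\<omega>. u \<omega> * (SUP i. U i) \<omega> \<partial>P0)"
    unfolding sa by (simp add: SUP_mult_left_ennreal)
  finally show ?case .
qed

end



lemma ennreal_mul_div_cancel:
  fixes g h :: ennreal
  assumes "h \<noteq> top" "h = 0 \<Longrightarrow> g = 0"
  shows "h * (g / h) = g"
proof (cases "h = 0")
  case True then show ?thesis using assms by simp
next
  case False
  then show ?thesis using assms
    by (metis ennreal_mult_divide_eq ennreal_times_divide mult.commute)
qed

lemma enn2real_div:
  fixes g h :: ennreal
  assumes "h \<noteq> top" "h = 0 \<Longrightarrow> g = 0"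
  shows "enn2real (g / h) = enn2real g / enn2real h"
proof (cases "h = 0")
  case True then show ?thesis using assms by simp
next
  case False
  then obtain r where r: "h = ennreal r" "0 < r" using assms(1)
    by (metis enn2real_ennreal ennreal_enn2real_if ennreal_less_zero_iff not_gr_zero enn2real_nonneg
        order_le_less)
  show ?thesis
  proof (cases "g = top")
    case True then show ?thesis using r by (simp add: ennreal_top_divide)
  next
    case False
    then obtain s where s: "g = ennreal s" "0 \<le> s" by (metis enn2real_nonneg ennreal_enn2real_if)
    then show ?thesis using r by (simp add: divide_ennreal)
  qed
qed

locale core = kern +
  fixes F :: "'w measure" and A :: "'w set"
  assumes Fsub: "subalgebra (completion P0) F"
  and AF: "A \<in> sets F" and AP: "A \<in> sets P0"
  and trace: "\<And>S. S \<in> sets F \<Longrightarrow> \<exists>S'\<in>sets H. AE \<omega> in completion P0. (\<omega> \<in> S \<inter> A) = (\<omega> \<in> S' \<inter> A)"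
  and lift: "\<And>S'. S' \<in> sets H \<Longrightarrow> A \<inter> S' \<in> sets F"
begin

lemma spF: "space F = space P0" using Fsub by (simp add: subalgebra_def)

lemma meas_lift:
  assumes phi: "\<phi> \<in> borel_measurable H"
  shows "(\<lambda>\<omega>. indicator A \<omega> * \<phi> \<omega> :: real) \<in> borel_measurable F"
proof (rule measurableI)
  fix B :: "real set" assume B: "B \<in> sets borel"
  have A0: "A \<subseteq> space P0" using AP sets.sets_into_space by blast
  have eq: "(\<lambda>\<omega>. indicator A \<omega> * \<phi> \<omega>) -` B \<inter> space F
     = (A \<inter> (\<phi> -` B \<inter> space H)) \<union> (if 0 \<in> B then space F - A else {})"
    using A0 by (auto simp: spF spH indicator_def of_bool_def split: if_split_asm)
  have "A \<inter> (\<phi> -` B \<inter> space H) \<in> sets F"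
    using lift measurable_sets[OF phi B] by blast
  moreover have "space F - A \<in> sets F" using AF by blast
  ultimately show "(\<lambda>\<omega>. indicator A \<omega> * \<phi> \<omega>) -` B \<inter> space F \<in> sets F"
    unfolding eq by auto
qed auto

lemma Kind: "\<omega> \<in> space P0 \<Longrightarrow> (\<integral>\<^sup>+x. indicator A x \<partial>K \<omega>) = emeasure (K \<omega>) A"
  using AP Ksets by simp

lemma G0:
  assumes "\<omega> \<in> space P0" "emeasure (K \<omega>) A = 0"
  shows "(\<integral>\<^sup>+x. u x * indicator A x \<partial>K \<omega>) = 0"
proof -
  have "A \<in> null_sets (K \<omega>)" using assms AP Ksets by (auto intro: null_setsI)
  then have "AE x in K \<omega>. x \<notin> A" by (rule AE_not_in)
  then have "(\<integral>\<^sup>+x. u x * indicator A x \<partial>K \<omega>) = (\<integral>\<^sup>+x. 0 \<partial>K \<omega>)"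
    by (intro nn_integral_cong_AE) auto
  then show ?thesis by simp
qed

lemma Htop: "\<omega> \<in> space P0 \<Longrightarrow> emeasure (K \<omega>) A \<noteq> top"
  using Kprob by (metis prob_space_def finite_measure.emeasure_finite)

lemma keyb:
  assumes u: "u \<in> borel_measurable P0" and phi: "\<phi> \<in> borel_measurable H"
  shows "(\<integral>\<^sup>+\<omega>. indicator A \<omega> * ((\<integral>\<^sup>+x. u x * indicator A x \<partial>K \<omega>) / emeasure (K \<omega>) A) * \<phi> \<omega> \<partial>P0)
       = (\<integral>\<^sup>+\<omega>. u \<omega> * indicator A \<omega> * \<phi> \<omega> \<partial>P0)"
proof -
  let ?G = "\<lambda>\<omega>. \<integral>\<^sup>+x. u x * indicator A x \<partial>K \<omega>"
  let ?H = "\<lambda>\<omega>. emeasure (K \<omega>) A"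
  have uA: "(\<lambda>x. u x * indicator A x) \<in> borel_measurable P0" using u AP by measurable
  have mG: "?G \<in> borel_measurable H" by (rule KN_meas[OF uA])
  have mH: "?H \<in> borel_measurable H" by (rule Kmeas[OF AP])
  have mpsi: "(\<lambda>\<omega>. ?G \<omega> / ?H \<omega> * \<phi> \<omega>) \<in> borel_measurable H" using mG mH phi by measurable
  have iA: "indicator A \<in> borel_measurable P0" using AP by measurable
  have "(\<integral>\<^sup>+\<omega>. indicator A \<omega> * (?G \<omega> / ?H \<omega>) * \<phi> \<omega> \<partial>P0)
      = (\<integral>\<^sup>+\<omega>. indicator A \<omega> * (?G \<omega> / ?H \<omega> * \<phi> \<omega>) \<partial>P0)" by (simp add: mult.assoc)
  also have "\<dots> = (\<integral>\<^sup>+\<omega>. (\<integral>\<^sup>+x. indicator A x \<partial>K \<omega>) * (?G \<omega> / ?H \<omega> * \<phi> \<omega>) \<partial>P0)"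
    by (rule KL2[OF iA mpsi, symmetric])
  also have "\<dots> = (\<integral>\<^sup>+\<omega>. ?G \<omega> * \<phi> \<omega> \<partial>P0)"
  proof (rule nn_integral_cong)
    fix \<omega> assume w: "\<omega> \<in> space P0"
    have "?H \<omega> * (?G \<omega> / ?H \<omega>) = ?G \<omega>"
      by (rule ennreal_mul_div_cancel) (use w Htop G0 in auto)
    then show "(\<integral>\<^sup>+x. indicator A x \<partial>K \<omega>) * (?G \<omega> / ?H \<omega> * \<phi> \<omega>) = ?G \<omega> * \<phi> \<omega>"
      using Kind[OF w] by (metis mult.assoc)
  qed
  also have "\<dots> = (\<integral>\<^sup>+\<omega>. u \<omega> * indicator A \<omega> * \<phi> \<omega> \<partial>P0)"
    by (rule KL2[OF uA phi])
  finally show ?thesis .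
qed

lemma ennreal_ind: "ennreal (r * indicator A x) = ennreal r * indicator A x"
  by (simp add: indicator_def)

lemma sfs: "sigma_finite_subalgebra (completion P0) F"
proof -
  interpret Pp: prob_space "completion P0" using prob_space.prob_space_completion[OF P0] .
  show ?thesis
    by (rule finite_measure_subalgebra_is_sigma_finite)
       (simp add: finite_measure_subalgebra_def finite_measure_subalgebra_axioms_def Fsub Pp.finite_measure_axioms)
qed

lemma nonneg_core:
  fixes \<xi> :: "'w \<Rightarrow> real"
  assumes xm[measurable]: "\<xi> \<in> borel_measurable P0" and nn: "\<And>x. 0 \<le> \<xi> x" and xi: "integrable P0 \<xi>"
  shows "AE \<omega> in completion P0. real_cond_exp (completion P0) F (\<lambda>x. \<xi> x * indicator A x) \<omega>
     = indicator A \<omega> * ((\<integral>x. \<xi> x * indicator A x \<partial>K \<omega>) / measure (K \<omega>) A)"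
proof -
  let ?P = "completion P0"
  interpret sfs: sigma_finite_subalgebra ?P F by (rule sfs)
  define G where "G \<omega> = (\<integral>\<^sup>+x. ennreal (\<xi> x) * indicator A x \<partial>K \<omega>)" for \<omega>
  define Hh where "Hh \<omega> = emeasure (K \<omega>) A" for \<omega>
  define f where "f \<omega> = indicator A \<omega> * enn2real (G \<omega> / Hh \<omega>)" for \<omega>
  have AP'[measurable]: "A \<in> sets P0" by (rule AP)
  have uA: "(\<lambda>x. ennreal (\<xi> x) * indicator A x) \<in> borel_measurable P0" by measurable
  have mG: "G \<in> borel_measurable H" unfolding G_def by (rule KN_meas[OF uA])
  have mH: "Hh \<in> borel_measurable H" unfolding Hh_def by (rule Kmeas[OF AP])
  have mq: "(\<lambda>\<omega>. enn2real (G \<omega> / Hh \<omega>)) \<in> borel_measurable H" using mG mH by measurable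
  have fF: "f \<in> borel_measurable F" unfolding f_def by (rule meas_lift[OF mq])
  have fP: "f \<in> borel_measurable ?P" using fF measurable_from_subalg[OF Fsub] by blast
  have mG0[measurable]: "G \<in> borel_measurable P0" using mG measurable_from_subalg[OF subalg] by blast
  have mH0[measurable]: "Hh \<in> borel_measurable P0" using mH measurable_from_subalg[OF subalg] by blast
  have fP0[measurable]: "f \<in> borel_measurable P0" unfolding f_def by measurable
  have key: "\<And>\<phi>. \<phi> \<in> borel_measurable H \<Longrightarrow>
     (\<integral>\<^sup>+\<omega>. indicator A \<omega> * (G \<omega> / Hh \<omega>) * \<phi> \<omega> \<partial>P0) = (\<integral>\<^sup>+\<omega>. ennreal (\<xi> \<omega>) * indicator A \<omega> * \<phi> \<omega> \<partial>P0)"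
    unfolding G_def Hh_def by (rule keyb) measurable
  have intA: "integrable P0 (\<lambda>x. \<xi> x * indicator A x)"
    using integrable_mult_indicator[OF AP xi] by (simp add: mult.commute)
  have fin: "(\<integral>\<^sup>+\<omega>. ennreal (\<xi> \<omega>) * indicator A \<omega> \<partial>P0) < \<infinity>"
  proof -
    have "(\<integral>\<^sup>+\<omega>. ennreal (\<xi> \<omega>) * indicator A \<omega> \<partial>P0) = (\<integral>\<^sup>+\<omega>. ennreal (\<xi> \<omega> * indicator A \<omega>) \<partial>P0)"
      by (simp add: ennreal_ind)
    also have "\<dots> = ennreal (\<integral>\<omega>. \<xi> \<omega> * indicator A \<omega> \<partial>P0)"
      by (rule nn_integral_eq_integral[OF intA]) (simp add: nn)
    finally show ?thesis by simp
  qed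
  have fin2: "(\<integral>\<^sup>+\<omega>. indicator A \<omega> * (G \<omega> / Hh \<omega>) \<partial>P0) < \<infinity>"
    using key[of "\<lambda>_. 1"] fin by simp
  have Fe_fin: "AE \<omega> in P0. indicator A \<omega> * (G \<omega> / Hh \<omega>) \<noteq> \<infinity>"
    by (rule nn_integral_PInf_AE) (use fin2 in auto)
  have ennf: "AE \<omega> in P0. ennreal (f \<omega>) = indicator A \<omega> * (G \<omega> / Hh \<omega>)"
    using Fe_fin by eventually_elim (auto simp: f_def indicator_def ennreal_enn2real_if)
  have intf: "integrable P0 f"
  proof (rule integrableI_bounded)
    have "(\<integral>\<^sup>+x. ennreal (norm (f x)) \<partial>P0) = (\<integral>\<^sup>+\<omega>. indicator A \<omega> * (G \<omega> / Hh \<omega>) \<partial>P0)"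
      using ennf by (intro nn_integral_cong_AE) (auto simp: f_def)
    then show "(\<integral>\<^sup>+x. ennreal (norm (f x)) \<partial>P0) < \<infinity>" using fin2 by simp
  qed simp
  have charact: "AE \<omega> in ?P. real_cond_exp ?P F (\<lambda>x. \<xi> x * indicator A x) \<omega> = f \<omega>"
  proof (rule sfs.real_cond_exp_charact)
    show "integrable ?P (\<lambda>x. \<xi> x * indicator A x)" using intA by (simp add: integrable_completion)
    show "integrable ?P f" using intf by (simp add: integrable_completion)
    show "f \<in> borel_measurable F" by (rule fF)
    fix S assume S: "S \<in> sets F"
    then have SP: "S \<in> sets ?P" using Fsub by (auto simp: subalgebra_def)
    obtain S' where S': "S' \<in> sets H" "AE \<omega> in ?P. (\<omega> \<in> S \<inter> A) = (\<omega> \<in> S' \<inter> A)"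
      using trace[OF S] by blast
    have S'0[measurable]: "S' \<in> sets P0" using S'(1) setsH by auto
    have iS': "indicator S' \<in> borel_measurable H" using S'(1) by measurable
    have [measurable]: "\<xi> \<in> borel_measurable ?P" by (rule measurable_completion[OF xm])
    have [measurable]: "A \<in> sets ?P" by simp
    have [measurable]: "S \<in> sets ?P" by (rule SP)
    have m1: "(\<lambda>x. indicator S x * (\<xi> x * indicator A x)) \<in> borel_measurable ?P"
      by measurable
    have m2: "(\<lambda>x. indicator S x * f x) \<in> borel_measurable ?P"
      using SP fP by measurable
    have "(\<integral>\<^sup>+x. ennreal (indicator S x * (\<xi> x * indicator A x)) \<partial>?P)
        = (\<integral>\<^sup>+x. ennreal (\<xi> x) * indicator A x * indicator S' x \<partial>?P)"
      using S'(2) by (intro nn_integral_cong_AE) (auto elim!: eventually_mono simp: indicator_def)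
    also have "\<dots> = (\<integral>\<^sup>+x. ennreal (\<xi> x) * indicator A x * indicator S' x \<partial>P0)"
      by (rule nn_integral_completion)
    also have "\<dots> = (\<integral>\<^sup>+\<omega>. indicator A \<omega> * (G \<omega> / Hh \<omega>) * indicator S' \<omega> \<partial>P0)"
      by (rule key[OF iS', symmetric])
    also have "\<dots> = (\<integral>\<^sup>+\<omega>. indicator A \<omega> * (G \<omega> / Hh \<omega>) * indicator S' \<omega> \<partial>?P)"
      by (rule nn_integral_completion[symmetric])
    also have "\<dots> = (\<integral>\<^sup>+x. ennreal (indicator S x * f x) \<partial>?P)"
    proof (rule nn_integral_cong_AE)
      have "AE \<omega> in ?P. ennreal (f \<omega>) = indicator A \<omega> * (G \<omega> / Hh \<omega>)" using ennf by (rule AE_completion)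
      then show "AE \<omega> in ?P. indicator A \<omega> * (G \<omega> / Hh \<omega>) * indicator S' \<omega> = ennreal (indicator S \<omega> * f \<omega>)"
        using S'(2) by eventually_elim (auto simp: indicator_def f_def)
    qed
    finally have eq: "(\<integral>\<^sup>+x. ennreal (indicator S x * (\<xi> x * indicator A x)) \<partial>?P)
        = (\<integral>\<^sup>+x. ennreal (indicator S x * f x) \<partial>?P)" .
    have fnn: "\<And>x. 0 \<le> f x" by (simp add: f_def)
    show "(\<integral>x\<in>S. \<xi> x * indicator A x \<partial>?P) = (\<integral>x\<in>S. f x \<partial>?P)"
      unfolding set_lebesgue_integral_def real_scaleR_def
      using m1 m2 eq nn fnn by (simp add: integral_eq_nn_integral)
  qed
  have pw: "\<And>\<omega>. \<omega> \<in> space P0 \<Longrightarrow> f \<omega> = indicator A \<omega> * ((\<integral>x. \<xi> x * indicator A x \<partial>K \<omega>) / measure (K \<omega>) A)"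
  proof -
    fix \<omega> assume w: "\<omega> \<in> space P0"
    have e1: "enn2real (G \<omega> / Hh \<omega>) = enn2real (G \<omega>) / enn2real (Hh \<omega>)"
      by (rule enn2real_div) (use w Htop G0 in \<open>auto simp: G_def Hh_def\<close>)
    have mK: "(\<lambda>x. \<xi> x * indicator A x) \<in> borel_measurable (K \<omega>)"
      using Ksets[OF w] by (simp add: measurable_cong_sets[OF Ksets[OF w] refl])
    have e2: "(\<integral>x. \<xi> x * indicator A x \<partial>K \<omega>) = enn2real (G \<omega>)"
      unfolding G_def using mK nn by (simp add: integral_eq_nn_integral ennreal_ind)
    have e3: "measure (K \<omega>) A = enn2real (Hh \<omega>)" by (simp add: Hh_def measure_def)
    show "f \<omega> = indicator A \<omega> * ((\<integral>x. \<xi> x * indicator A x \<partial>K \<omega>) / measure (K \<omega>) A)"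
      unfolding f_def e1 e2 e3 ..
  qed
  have "AE \<omega> in ?P. f \<omega> = indicator A \<omega> * ((\<integral>x. \<xi> x * indicator A x \<partial>K \<omega>) / measure (K \<omega>) A)"
    by (rule AE_I2) (simp add: pw)
  with charact show ?thesis
    by eventually_elim simp
qed

end



context core begin

lemma kint:
  fixes u :: "'w \<Rightarrow> real"
  assumes um[measurable]: "u \<in> borel_measurable P0" and nn: "\<And>x. 0 \<le> u x" and ui: "integrable P0 u"
  shows "AE \<omega> in P0. integrable (K \<omega>) (\<lambda>x. u x * indicator A x)"
proof -
  have AP'[measurable]: "A \<in> sets P0" by (rule AP)
  have uA: "(\<lambda>x. ennreal (u x * indicator A x)) \<in> borel_measurable P0" by measurable
  have mG: "(\<lambda>\<omega>. \<integral>\<^sup>+x. ennreal (u x * indicator A x) \<partial>K \<omega>) \<in> borel_measurable P0"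
    using KN_meas[OF uA] measurable_from_subalg[OF subalg] by blast
  have intA: "integrable P0 (\<lambda>x. u x * indicator A x)"
    using integrable_mult_indicator[OF AP ui] by (simp add: mult.commute)
  have "(\<integral>\<^sup>+\<omega>. (\<integral>\<^sup>+x. ennreal (u x * indicator A x) \<partial>K \<omega>) * 1 \<partial>P0)
      = (\<integral>\<^sup>+\<omega>. ennreal (u \<omega> * indicator A \<omega>) * 1 \<partial>P0)"
    by (rule KL2[OF uA]) simp
  also have "\<dots> = ennreal (\<integral>\<omega>. u \<omega> * indicator A \<omega> \<partial>P0)"
    using nn_integral_eq_integral[OF intA] nn by simp
  finally have "(\<integral>\<^sup>+\<omega>. (\<integral>\<^sup>+x. ennreal (u x * indicator A x) \<partial>K \<omega>) \<partial>P0) \<noteq> \<infinity>" by simp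
  then have "AE \<omega> in P0. (\<integral>\<^sup>+x. ennreal (u x * indicator A x) \<partial>K \<omega>) \<noteq> \<infinity>"
    by (rule nn_integral_PInf_AE[OF mG])
  moreover have "AE \<omega> in P0. \<omega> \<in> space P0" by simp
  ultimately show ?thesis
  proof eventually_elim
    case (elim \<omega>)
    have mK: "(\<lambda>x. u x * indicator A x) \<in> borel_measurable (K \<omega>)"
      by (simp add: measurable_cong_sets[OF Ksets[OF elim(2)] refl])
    show ?case
    proof (rule integrableI_bounded[OF mK])
      have "(\<integral>\<^sup>+x. ennreal (norm (u x * indicator A x)) \<partial>K \<omega>) = (\<integral>\<^sup>+x. ennreal (u x * indicator A x) \<partial>K \<omega>)"
        using nn by (intro nn_integral_cong) (simp add: abs_mult)
      then show "(\<integral>\<^sup>+x. ennreal (norm (u x * indicator A x)) \<partial>K \<omega>) < \<infinity>"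
        using elim(1) by (simp add: less_top)
    qed
  qed
qed

lemma gen_core:
  fixes \<xi> :: "'w \<Rightarrow> real"
  assumes xm[measurable]: "\<xi> \<in> borel_measurable P0" and xi: "integrable (completion P0) \<xi>"
  shows "AE \<omega> in completion P0. indicator A \<omega> * real_cond_exp (completion P0) F \<xi> \<omega>
     = indicator A \<omega> * ((\<integral>x. \<xi> x * indicator A x \<partial>K \<omega>) / measure (K \<omega>) A)"
proof -
  let ?P = "completion P0"
  interpret sfs: sigma_finite_subalgebra ?P F by (rule sfs)
  have AP'[measurable]: "A \<in> sets P0" by (rule AP)
  have xi0: "integrable P0 \<xi>" using xi by (simp add: integrable_completion)
  define xp where "xp x = max (\<xi> x) 0" for x
  define xn where "xn x = max (- \<xi> x) 0" for x
  have [measurable]: "xp \<in> borel_measurable P0" "xn \<in> borel_measurable P0"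
    unfolding xp_def xn_def by measurable
  have nnp: "\<And>x. 0 \<le> xp x" and nnn: "\<And>x. 0 \<le> xn x" by (simp_all add: xp_def xn_def)
  have ip: "integrable P0 xp" unfolding xp_def by (rule integrable_max[OF xi0]) simp
  have inn: "integrable P0 xn" unfolding xn_def by (rule integrable_max) (use xi0 in auto)
  have split: "\<And>x. \<xi> x * indicator A x = xp x * indicator A x - xn x * indicator A x"
    by (simp add: xp_def xn_def max_def indicator_def)
  have ipA: "integrable ?P (\<lambda>x. xp x * indicator A x)"
    using integrable_mult_indicator[OF AP ip] by (simp add: integrable_completion mult.commute)
  have inA: "integrable ?P (\<lambda>x. xn x * indicator A x)"
    using integrable_mult_indicator[OF AP inn] by (simp add: integrable_completion mult.commute)
  have d: "AE \<omega> in ?P. real_cond_exp ?P F (\<lambda>x. \<xi> x * indicator A x) \<omega>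
      = real_cond_exp ?P F (\<lambda>x. xp x * indicator A x) \<omega> - real_cond_exp ?P F (\<lambda>x. xn x * indicator A x) \<omega>"
    unfolding split by (rule sfs.real_cond_exp_diff[OF ipA inA])
  have AF'[measurable]: "A \<in> sets F" by (rule AF)
  have m: "AE \<omega> in ?P. real_cond_exp ?P F (\<lambda>x. indicator A x * \<xi> x) \<omega> = indicator A \<omega> * real_cond_exp ?P F \<xi> \<omega>"
  proof (rule sfs.real_cond_exp_mult)
    show "indicator A \<in> borel_measurable F" by measurable
    show "\<xi> \<in> borel_measurable ?P" by (rule measurable_completion[OF xm])
    show "integrable ?P (\<lambda>x. indicator A x * \<xi> x)"
      using integrable_mult_indicator[OF AP xi0] by (simp add: integrable_completion)
  qed
  have ee: "(\<lambda>x. indicator A x * \<xi> x) = (\<lambda>x. \<xi> x * indicator A x)" by (simp add: mult.commute)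
  have np: "AE \<omega> in ?P. real_cond_exp ?P F (\<lambda>x. xp x * indicator A x) \<omega>
     = indicator A \<omega> * ((\<integral>x. xp x * indicator A x \<partial>K \<omega>) / measure (K \<omega>) A)"
    by (rule nonneg_core) (simp_all add: nnp ip)
  have nn: "AE \<omega> in ?P. real_cond_exp ?P F (\<lambda>x. xn x * indicator A x) \<omega>
     = indicator A \<omega> * ((\<integral>x. xn x * indicator A x \<partial>K \<omega>) / measure (K \<omega>) A)"
    by (rule nonneg_core) (simp_all add: nnn inn)
  have kp: "AE \<omega> in ?P. integrable (K \<omega>) (\<lambda>x. xp x * indicator A x)"
    by (rule AE_completion, rule kint) (simp_all add: nnp ip)
  have kn: "AE \<omega> in ?P. integrable (K \<omega>) (\<lambda>x. xn x * indicator A x)"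
    by (rule AE_completion, rule kint) (simp_all add: nnn inn)
  from d m np nn kp kn show ?thesis
  proof eventually_elim
    case (elim \<omega>)
    have "(\<integral>x. \<xi> x * indicator A x \<partial>K \<omega>) = (\<integral>x. xp x * indicator A x - xn x * indicator A x \<partial>K \<omega>)"
      by (simp add: split)
    also have "\<dots> = (\<integral>x. xp x * indicator A x \<partial>K \<omega>) - (\<integral>x. xn x * indicator A x \<partial>K \<omega>)"
      by (rule Bochner_Integration.integral_diff[OF elim(5) elim(6)])
    finally have ie: "(\<integral>x. \<xi> x * indicator A x \<partial>K \<omega>) = (\<integral>x. xp x * indicator A x \<partial>K \<omega>) - (\<integral>x. xn x * indicator A x \<partial>K \<omega>)" .
    show ?case using elim(1-4) unfolding ie ee
      by (simp add: diff_divide_distrib right_diff_distrib)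
  qed
qed

end



lemma Sup_lt_ennreal: "Sup (ennreal ` {t. 0 \<le> t \<and> ennreal t < \<tau>}) = \<tau>"
proof (rule antisym)
  show "Sup (ennreal ` {t. 0 \<le> t \<and> ennreal t < \<tau>}) \<le> \<tau>"
    by (rule Sup_least) (auto intro: less_imp_le)
  show "\<tau> \<le> Sup (ennreal ` {t. 0 \<le> t \<and> ennreal t < \<tau>})"
  proof (rule le_Sup_iff[THEN iffD2], intro allI impI)
    fix y assume "y < \<tau>"
    then obtain z where z: "y < z" "z < \<tau>" using dense by blast
    then have "z \<noteq> top" by auto
    then have "z = ennreal (enn2real z)" by (simp add: ennreal_enn2real_if)
    then show "\<exists>a\<in>ennreal ` {t. 0 \<le> t \<and> ennreal t < \<tau>}. y < a"
      using z by (intro bexI[of _ z]) (auto intro!: image_eqI[of _ _ "enn2real z"])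
  qed
qed

lemma Sup_all_ennreal: "Sup (ennreal ` {t. 0 \<le> t}) = \<infinity>"
proof -
  have "ennreal ` {t. 0 \<le> t} = ennreal ` {t. 0 \<le> t \<and> ennreal t < \<infinity>}" by auto
  then show ?thesis using Sup_lt_ennreal[of \<infinity>] by simp
qed

lemma ZI_space: "ZI Z I \<omega> \<in> space (EI I)"
  by (simp add: ZI_def EI_def space_PiM)

lemma QI_empty: "QI T Z {} \<omega> = 0"
  by (simp add: QI_def muI_def ZI_space bot_ennreal)

lemma mu_eq:
  assumes i0: "i0 \<in> I"
  shows "muI T Z I \<omega> t (space (EI I)) =
    (if ((\<forall>i\<in>I. T i \<omega> = T i0 \<omega>) \<and> (\<forall>i\<in>I. \<forall>j. 1 \<le> j \<and> j \<notin> I \<longrightarrow> T i \<omega> \<noteq> T j \<omega>)) \<and> T i0 \<omega> \<le> ennreal t then 1 else 0)"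
proof -
  have e: "(\<forall>i\<in>I. \<forall>j\<in>I. T i \<omega> \<le> ennreal t \<and> T i \<omega> = T j \<omega>) \<longleftrightarrow> (\<forall>i\<in>I. T i \<omega> = T i0 \<omega>) \<and> T i0 \<omega> \<le> ennreal t"
    using i0 by metis
  show ?thesis unfolding muI_def e using ZI_space[of Z I \<omega>] by (simp only: simp_thms) (smt (verit))
qed

lemma QI_eq:
  assumes i0: "i0 \<in> I"
  shows "QI T Z I \<omega> = (if (\<forall>i\<in>I. T i \<omega> = T i0 \<omega>) \<and> (\<forall>i\<in>I. \<forall>j. 1 \<le> j \<and> j \<notin> I \<longrightarrow> T i \<omega> \<noteq> T j \<omega>)
      then T i0 \<omega> else \<infinity>)"
proof (cases "(\<forall>i\<in>I. T i \<omega> = T i0 \<omega>) \<and> (\<forall>i\<in>I. \<forall>j. 1 \<le> j \<and> j \<notin> I \<longrightarrow> T i \<omega> \<noteq> T j \<omega>)")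
  case True
  have "{t. 0 \<le> t \<and> muI T Z I \<omega> t (space (EI I)) = 0} = {t. 0 \<le> t \<and> ennreal t < T i0 \<omega>}"
    unfolding mu_eq[OF i0] using True by (auto simp: not_le)
  then have q: "QI T Z I \<omega> = T i0 \<omega>" unfolding QI_def by (simp only: Sup_lt_ennreal)
  show ?thesis by (rule trans[OF q if_P[OF True, symmetric]])
next
  case False
  have "{t. 0 \<le> t \<and> muI T Z I \<omega> t (space (EI I)) = 0} = {t. 0 \<le> t}"
    unfolding mu_eq[OF i0] using False by auto
  then have q: "QI T Z I \<omega> = \<infinity>" unfolding QI_def by (simp only: Sup_all_ennreal)
  show ?thesis by (rule trans[OF q if_not_P[OF False, symmetric]])
qed

lemma QI_meas:
  fixes P0 :: "'w measure" and Z :: "nat \<Rightarrow> 'w \<Rightarrow> 'e::topological_space"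
  assumes T: "\<And>i. T i \<in> borel_measurable P0" and I: "finite I"
  shows "QI T Z I \<in> borel_measurable P0"
proof (cases "I = {}")
  case True
  then have "QI T Z I = (\<lambda>_. 0)" by (intro ext) (simp add: QI_empty)
  then show ?thesis by simp
next
  case False
  then obtain i0 where i0: "i0 \<in> I" by auto
  have [measurable]: "\<And>i. T i \<in> borel_measurable P0" by (rule T)
  have eq: "QI T Z I = (\<lambda>\<omega>. if (\<forall>i\<in>I. T i \<omega> = T i0 \<omega>) \<and> (\<forall>i\<in>I. \<forall>j. 1 \<le> j \<and> j \<notin> I \<longrightarrow> T i \<omega> \<noteq> T j \<omega>)
      then T i0 \<omega> else \<infinity>)"
    by (intro ext) (rule QI_eq[OF i0])
  show ?thesis unfolding eq using I by measurable
qed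

lemma ZI_meas:
  fixes Z :: "nat \<Rightarrow> 'w \<Rightarrow> 'e::topological_space"
  assumes Z: "\<And>i. Z i \<in> borel_measurable P0"
  shows "ZI Z I \<in> measurable P0 (EI I)"
  unfolding ZI_def[abs_def] EI_def by (rule measurable_restrict) (rule Z)

lemma RI_meas:
  fixes Z :: "nat \<Rightarrow> 'w \<Rightarrow> 'e::topological_space"
  assumes T: "\<And>i. T i \<in> borel_measurable P0" and Z: "\<And>i. Z i \<in> borel_measurable P0" and I: "finite I"
  shows "RI T Z I \<in> measurable P0 (RI_space I)"
  unfolding RI_def[abs_def] RI_space_def
  by (rule measurable_Pair) (auto intro: QI_meas[OF T I] ZI_meas[OF Z])

lemma ZMRI_meas:
  fixes Z :: "nat \<Rightarrow> 'w \<Rightarrow> 'e::topological_space"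
  assumes T: "\<And>i. T i \<in> borel_measurable P0" and Z: "\<And>i. Z i \<in> borel_measurable P0" and I: "finite I"
  shows "ZM_RI T Z M I \<in> measurable P0 (ZM_RI_space M I)"
  unfolding ZM_RI_def[abs_def] ZM_RI_space_def
  by (rule measurable_Pair) (auto intro: RI_meas[OF T Z I] ZI_meas[OF Z])




lemma generic:
  fixes P0 :: "'w measure"
    and T :: "nat \<Rightarrow> 'w \<Rightarrow> ennreal"
    and Z :: "nat \<Rightarrow> 'w \<Rightarrow> 'e::topological_space"
    and K :: "'w \<Rightarrow> 'w measure"
    and \<xi> :: "'w \<Rightarrow> real"
    and M I :: "nat set"
    and act :: "nat \<Rightarrow> 'w \<Rightarrow> bool" and act' :: "nat \<Rightarrow> 'w \<Rightarrow> bool"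
    and Gen :: "'w set set" and A :: "'w set"
  assumes P0: "prob_space P0"
    and T_meas: "\<And>i. T i \<in> borel_measurable P0"
    and Z_meas: "\<And>i. Z i \<in> borel_measurable P0"
    and Z_pair: "\<And>i. 1 \<le> i \<Longrightarrow> Z (2*i-1) = Z (2*i)"
    and M: "M \<in> idxM" and I: "I \<in> idxN"
    and K: "regular_cond_prob P0 (ZM_RI T Z M I) (ZM_RI_space M I) K"
    and \<xi>: "\<xi> \<in> borel_measurable P0" "integrable (completion P0) \<xi>"
    and act_meas: "\<And>i. Measurable.pred P0 (act i)"
    and act': "\<And>k \<omega>. 1 \<le> k \<Longrightarrow> act' k \<omega> = act (2*k-1) \<omega>"
    and Gen: "Gen = {{\<omega> \<in> space P0. act' k \<omega> \<and> Z (2*k) \<omega> \<in> B} | k B. 1 \<le> k \<and> B \<in> sets (borel :: 'e measure)}"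
    and A: "A = {\<omega> \<in> space P0. (\<forall>i\<in>M. act i \<omega>) \<and> (\<forall>i. odd i \<and> i \<notin> M \<longrightarrow> \<not> act i \<omega>)}"
  shows "AE \<omega> in completion P0. indicator A \<omega> *
      real_cond_exp (completion P0) (sigma (space P0) (Gen \<union> null_sets (completion P0) \<union> sets (vimage_algebra (space P0) (RI T Z I) (RI_space I)))) \<xi> \<omega>
     = indicator A \<omega> * ((\<integral>x. \<xi> x * indicator A x \<partial>K \<omega>) / measure (K \<omega>) A)"
proof -
  let ?\<Omega> = "space P0"
  let ?P = "completion P0"
  let ?X = "ZM_RI T Z M I"
  let ?N = "ZM_RI_space M I :: ((nat \<Rightarrow> 'e) \<times> (ennreal \<times> (nat \<Rightarrow> 'e))) measure"
  let ?H = "sigmaRV P0 ?X ?N"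
  let ?R = "vimage_algebra ?\<Omega> (RI T Z I) (RI_space I)"
  let ?G = "Gen \<union> null_sets ?P \<union> sets ?R"
  let ?F = "sigma ?\<Omega> ?G"
  have Mfin: "finite M" and Modd: "\<And>i. i \<in> M \<Longrightarrow> odd i" using M by (auto simp: idxM_def)
  have Ifin: "finite I" using I by (simp add: idxN_def)
  have [measurable]: "\<And>i. T i \<in> borel_measurable P0" by (rule T_meas)
  have [measurable]: "\<And>i. Z i \<in> borel_measurable P0" by (rule Z_meas)
  have [measurable]: "\<And>i. Measurable.pred P0 (act i)" by (rule act_meas)
  have Xm: "?X \<in> measurable P0 ?N" by (rule ZMRI_meas[OF T_meas Z_meas Ifin])
  have Rm: "RI T Z I \<in> measurable P0 (RI_space I)" by (rule RI_meas[OF T_meas Z_meas Ifin])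
  have setsR: "sets ?R = {RI T Z I -` B \<inter> ?\<Omega> | B. B \<in> sets (RI_space I)}"
    by (rule sets_vimage_algebra2) (use measurable_space[OF Rm] in auto)
  have setsH: "sets ?H = {?X -` B \<inter> ?\<Omega> | B. B \<in> sets ?N}"
    unfolding sigmaRV_def by (rule sets_vimage_algebra2) (use measurable_space[OF Xm] in auto)
  have spH: "space ?H = ?\<Omega>" by (simp add: sigmaRV_def)
  have setsHE: "\<exists>E. S' = ?X -` E \<inter> ?\<Omega> \<and> E \<in> sets ?N" if S': "S' \<in> sets ?H" for S'
  proof -
    have "S' \<in> {?X -` B \<inter> ?\<Omega> | B. B \<in> sets ?N}" using S' by (simp only: setsH)
    then show ?thesis by (simp only: mem_Collect_eq)
  qed
  have setsRE: "\<exists>E. S' = RI T Z I -` E \<inter> ?\<Omega> \<and> E \<in> sets (RI_space I)" if S': "S' \<in> sets ?R" for S'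
  proof -
    have "S' \<in> {RI T Z I -` B \<inter> ?\<Omega> | B. B \<in> sets (RI_space I)}" using S' by (simp only: setsR)
    then show ?thesis by (simp only: mem_Collect_eq)
  qed
  have setsHI: "?X -` E \<inter> ?\<Omega> \<in> sets ?H" if "E \<in> sets ?N" for E
    unfolding sigmaRV_def by (rule in_vimage_algebra[OF that])
  have HP0: "sets ?H \<subseteq> sets P0" unfolding setsH using Xm by (auto intro: measurable_sets)
  have RP0: "sets ?R \<subseteq> sets P0" unfolding setsR using Rm by (auto intro: measurable_sets)
  have GenE: "\<And>S. S \<in> Gen \<Longrightarrow> \<exists>k B. 1 \<le> k \<and> B \<in> sets (borel :: 'e measure) \<and>
       S = {\<omega> \<in> ?\<Omega>. act (2*k-1) \<omega> \<and> Z (2*k-1) \<omega> \<in> B}"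
  proof -
    fix S assume "S \<in> Gen"
    then obtain k B where kB: "1 \<le> k" "B \<in> sets (borel :: 'e measure)" "S = {\<omega> \<in> ?\<Omega>. act' k \<omega> \<and> Z (2*k) \<omega> \<in> B}"
      unfolding Gen by blast
    then show "\<exists>k B. 1 \<le> k \<and> B \<in> sets (borel :: 'e measure) \<and> S = {\<omega> \<in> ?\<Omega>. act (2*k-1) \<omega> \<and> Z (2*k-1) \<omega> \<in> B}"
      using act' Z_pair by (intro exI[of _ k] exI[of _ B]) auto
  qed
  have GenI: "\<And>i B. odd i \<Longrightarrow> B \<in> sets (borel :: 'e measure) \<Longrightarrow> {\<omega> \<in> ?\<Omega>. act i \<omega> \<and> Z i \<omega> \<in> B} \<in> Gen"
  proof -
    fix i :: nat and B :: "'e set" assume i: "odd i" and B: "B \<in> sets (borel :: 'e measure)"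
    define k where "k = (i + 1) div 2"
    have k: "1 \<le> k" "2*k-1 = i" using i by (auto simp: k_def elim!: oddE)
    have "{\<omega> \<in> ?\<Omega>. act i \<omega> \<and> Z i \<omega> \<in> B} = {\<omega> \<in> ?\<Omega>. act' k \<omega> \<and> Z (2*k) \<omega> \<in> B}"
      using act'[OF k(1)] Z_pair[OF k(1)] k(2) by auto
    then show "{\<omega> \<in> ?\<Omega>. act i \<omega> \<and> Z i \<omega> \<in> B} \<in> Gen"
      unfolding Gen using k(1) B by blast
  qed
  have GenP0: "Gen \<subseteq> sets P0"
  proof
    fix S assume "S \<in> Gen"
    then obtain k B where kB: "B \<in> sets (borel :: 'e measure)" "S = {\<omega> \<in> ?\<Omega>. act (2*k-1) \<omega> \<and> Z (2*k-1) \<omega> \<in> B}"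
      using GenE by blast
    show "S \<in> sets P0" unfolding kB(2) using kB(1) by measurable
  qed
  have nP: "null_sets ?P \<subseteq> sets ?P" by (blast dest: null_setsD2)
  have P0P: "sets P0 \<subseteq> sets ?P" by blast
  have GP: "?G \<subseteq> sets ?P" using GenP0 RP0 nP P0P by blast
  have PPow: "sets ?P \<subseteq> Pow ?\<Omega>" using sets.space_closed[of ?P] by simp
  have GPow: "?G \<subseteq> Pow ?\<Omega>" using GP PPow by (rule subset_trans)
  have setsF: "sets ?F = sigma_sets ?\<Omega> ?G" by (rule sets_measure_of[OF GPow])
  have spF: "space ?F = ?\<Omega>" by (rule space_measure_of[OF GPow])
  have ss: "sigma_sets (space ?P) ?G \<subseteq> sets ?P" by (rule sets.sigma_sets_subset[OF GP])
  have Fsub: "subalgebra ?P ?F"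
    unfolding subalgebra_def spF setsF using ss by (simp only: space_completion simp_thms)
  have AP: "A \<in> sets P0" unfolding A using Mfin by measurable
  have Aact: "\<And>\<omega> i. \<omega> \<in> A \<Longrightarrow> i \<in> M \<Longrightarrow> act i \<omega>" unfolding A by blast
  have Anact: "\<And>\<omega> i. \<omega> \<in> A \<Longrightarrow> odd i \<Longrightarrow> i \<notin> M \<Longrightarrow> \<not> act i \<omega>" unfolding A by blast
  have A0: "A \<subseteq> ?\<Omega>" unfolding A by blast
  define D where "D i = {\<omega> \<in> ?\<Omega>. (i \<in> M \<and> \<not> act i \<omega>) \<or> (i \<notin> M \<and> odd i \<and> act i \<omega>)}" for i
  have DS: "D i \<in> sigma_sets ?\<Omega> ?G" for i
  proof -
    have g: "odd i \<Longrightarrow> {\<omega> \<in> ?\<Omega>. act i \<omega> \<and> Z i \<omega> \<in> UNIV} \<in> sigma_sets ?\<Omega> ?G"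
      using GenI[of i UNIV] by (intro sigma_sets.Basic) simp
    have e: "{\<omega> \<in> ?\<Omega>. act i \<omega> \<and> Z i \<omega> \<in> UNIV} = {\<omega> \<in> ?\<Omega>. act i \<omega>}" by simp
    consider (a) "i \<in> M" | (b) "i \<notin> M" "odd i" | (c) "i \<notin> M" "\<not> odd i" by blast
    then show ?thesis
    proof cases
      case a
      then have "D i = ?\<Omega> - {\<omega> \<in> ?\<Omega>. act i \<omega> \<and> Z i \<omega> \<in> UNIV}" unfolding D_def by blast
      then show ?thesis using g[OF Modd[OF a]] by (simp only: sigma_sets.Compl)
    next
      case b
      then have "D i = {\<omega> \<in> ?\<Omega>. act i \<omega> \<and> Z i \<omega> \<in> UNIV}" unfolding D_def by blast
      then show ?thesis using g[OF b(2)] by simp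
    next
      case c
      then have "D i = {}" unfolding D_def by blast
      then show ?thesis by (simp add: sigma_sets.Empty)
    qed
  qed
  have AD: "A = ?\<Omega> - (\<Union>i. D i)"
    unfolding A D_def by blast
  have AF: "A \<in> sets ?F" unfolding setsF AD
    by (intro sigma_sets.Compl sigma_sets.Union DS)
  have Kr: "\<forall>\<omega>\<in>space P0. prob_space (K \<omega>) \<and> sets (K \<omega>) = sets P0"
     "\<forall>B\<in>sets P0. (\<lambda>\<omega>. emeasure (K \<omega>) B) \<in> borel_measurable ?H \<and>
        (\<forall>C\<in>sets ?H. (\<integral>\<^sup>+\<omega>. emeasure (K \<omega>) B * indicator C \<omega> \<partial>P0) = emeasure P0 (B \<inter> C))"
    using K unfolding regular_cond_prob_def by blast+
  interpret kern P0 ?H K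
    by (rule kern.intro[OF P0 spH HP0]) (use Kr in blast)+
  obtain e0 :: 'e where True by blast
  define X' where "X' \<omega> = (\<lambda>i\<in>M. if \<omega> \<in> A then Z i \<omega> else e0, RI T Z I \<omega>)" for \<omega>
  have Zc: "(\<lambda>\<omega>. if \<omega> \<in> A then Z i \<omega> else e0) \<in> measurable ?F borel" if i: "i \<in> M" for i
  proof (rule measurableI)
    fix B :: "'e set" assume B: "B \<in> sets borel"
    have eq: "(\<lambda>\<omega>. if \<omega> \<in> A then Z i \<omega> else e0) -` B \<inter> space ?F
        = (A \<inter> {\<omega> \<in> ?\<Omega>. act i \<omega> \<and> Z i \<omega> \<in> B}) \<union> (if e0 \<in> B then ?\<Omega> - A else {})"
      using A0 Aact[OF _ i] unfolding spF by (auto split: if_split_asm)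
    have g: "{\<omega> \<in> ?\<Omega>. act i \<omega> \<and> Z i \<omega> \<in> B} \<in> sets ?F"
      unfolding setsF using GenI[OF Modd[OF i] B] by (auto intro: sigma_sets.Basic)
    have c: "?\<Omega> - A \<in> sets ?F" using sets.compl_sets[OF AF] by (simp only: spF)
    have "(A \<inter> {\<omega> \<in> ?\<Omega>. act i \<omega> \<and> Z i \<omega> \<in> B}) \<union> (if e0 \<in> B then ?\<Omega> - A else {}) \<in> sets ?F"
      using AF g c by (intro sets.Un sets.Int) auto
    then show "(\<lambda>\<omega>. if \<omega> \<in> A then Z i \<omega> else e0) -` B \<inter> space ?F \<in> sets ?F"
      unfolding eq .
  qed auto
  have Rc: "RI T Z I \<in> measurable ?F (RI_space I)"
  proof (rule measurableI)
    show "\<And>x. x \<in> space ?F \<Longrightarrow> RI T Z I x \<in> space (RI_space I)"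
      using measurable_space[OF Rm] by (auto simp: spF)
    fix B :: "(ennreal \<times> (nat \<Rightarrow> 'e)) set" assume "B \<in> sets (RI_space I)"
    then have "RI T Z I -` B \<inter> ?\<Omega> \<in> sets ?R" unfolding setsR by blast
    then show "RI T Z I -` B \<inter> space ?F \<in> sets ?F"
      unfolding spF setsF by (auto intro: sigma_sets.Basic)
  qed
  have Z'm: "(\<lambda>\<omega>. \<lambda>i\<in>M. if \<omega> \<in> A then Z i \<omega> else e0) \<in> measurable ?F (EI M)"
    unfolding EI_def by (rule measurable_restrict) (rule Zc)
  have X'm: "X' \<in> measurable ?F ?N"
    unfolding X'_def[abs_def] ZM_RI_space_def by (rule measurable_Pair[OF Z'm Rc])
  have lift: "A \<inter> S' \<in> sets ?F" if S': "S' \<in> sets ?H" for S'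
  proof -
    obtain E where E: "S' = ?X -` E \<inter> ?\<Omega> \<and> E \<in> sets ?N" using setsHE[OF S'] by (rule exE)
    note E = conjunct2[OF E] conjunct1[OF E]
    have XX: "\<And>\<omega>. \<omega> \<in> A \<Longrightarrow> X' \<omega> = ?X \<omega>"
      by (simp add: X'_def ZM_RI_def ZI_def)
    have "A \<inter> S' = A \<inter> (X' -` E \<inter> space ?F)"
    proof (rule set_eqI)
      fix \<omega>
      show "\<omega> \<in> A \<inter> S' \<longleftrightarrow> \<omega> \<in> A \<inter> (X' -` E \<inter> space ?F)"
        unfolding E(2) spF using XX[of \<omega>] A0 by (cases "\<omega> \<in> A") auto
    qed
    moreover have "X' -` E \<inter> space ?F \<in> sets ?F" by (rule measurable_sets[OF X'm E(1)])
    ultimately show ?thesis using AF by auto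
  qed
  have trace: "\<exists>S'\<in>sets ?H. AE \<omega> in ?P. (\<omega> \<in> S \<inter> A) = (\<omega> \<in> S' \<inter> A)" if S: "S \<in> sets ?F" for S
  proof -
    have "S \<in> sigma_sets ?\<Omega> ?G" using S setsF by simp
    then show ?thesis
    proof induction
      case (Basic S)
      then consider "S \<in> Gen" | "S \<in> null_sets ?P" | "S \<in> sets ?R" by blast
      then show ?case
      proof cases
        case 1
        then obtain k B where kB: "1 \<le> k" "B \<in> sets (borel :: 'e measure)" "S = {\<omega> \<in> ?\<Omega>. act (2*k-1) \<omega> \<and> Z (2*k-1) \<omega> \<in> B}"
          using GenE[OF 1] by blast
        define i where "i = 2*k-1"
        show ?thesis
        proof (cases "i \<in> M")
          case True
          have fm: "(\<lambda>p. fst p i) \<in> measurable ?N borel"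
            unfolding ZM_RI_space_def EI_def
            by (rule measurable_compose[OF measurable_fst measurable_component_singleton[OF True]])
          define E where "E = (\<lambda>p. fst p i) -` B \<inter> space ?N"
          have E: "E \<in> sets ?N" unfolding E_def by (rule measurable_sets[OF fm kB(2)])
          have S'H: "?X -` E \<inter> ?\<Omega> \<in> sets ?H" by (rule setsHI[OF E])
          have fX: "\<And>\<omega>. fst (?X \<omega>) i = Z i \<omega>" using True by (simp add: ZM_RI_def ZI_def)
          have "S \<inter> A = (?X -` E \<inter> ?\<Omega>) \<inter> A"
          proof (rule set_eqI)
            fix \<omega>
            show "\<omega> \<in> S \<inter> A \<longleftrightarrow> \<omega> \<in> (?X -` E \<inter> ?\<Omega>) \<inter> A"
            proof (cases "\<omega> \<in> A")
              case True
              then have w: "\<omega> \<in> ?\<Omega>" "act i \<omega>" using A0 Aact[OF _ \<open>i \<in> M\<close>] by auto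
              have sp: "?X \<omega> \<in> space ?N" using measurable_space[OF Xm w(1)] .
              show ?thesis unfolding kB(3) E_def i_def[symmetric]
                using True w sp fX[of \<omega>] by simp
            qed simp
          qed
          then show ?thesis using S'H by (intro bexI[of _ "?X -` E \<inter> ?\<Omega>"]) auto
        next
          case False
          have "odd i" using kB(1) by (simp add: i_def)
          then have "S \<inter> A = {}" using False Anact unfolding kB(3) i_def[symmetric] by blast
          then show ?thesis by (intro bexI[of _ "{}"]) auto
        qed
      next
        case 2
        then have "AE \<omega> in ?P. \<omega> \<notin> S" by (rule AE_not_in)
        then show ?thesis by (intro bexI[of _ "{}"]) (auto elim!: eventually_mono)
      next
        case 3
        obtain B where B: "S = RI T Z I -` B \<inter> ?\<Omega> \<and> B \<in> sets (RI_space I)" using setsRE[OF 3] by (rule exE)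
        note B = conjunct2[OF B] conjunct1[OF B]
        have E: "space (EI M) \<times> B \<in> sets ?N" unfolding ZM_RI_space_def using B(1) by (intro pair_measureI) auto
        have S'H: "?X -` (space (EI M) \<times> B) \<inter> ?\<Omega> \<in> sets ?H" by (rule setsHI[OF E])
        have "S = ?X -` (space (EI M) \<times> B) \<inter> ?\<Omega>"
          unfolding B(2) by (auto simp: ZM_RI_def ZI_space)
        then show ?thesis using S'H by (intro bexI[of _ S]) auto
      qed
    next
      case Empty
      then show ?case by (intro bexI[of _ "{}"]) auto
    next
      case (Compl a)
      then obtain a' where a': "a' \<in> sets ?H" "AE \<omega> in ?P. (\<omega> \<in> a \<inter> A) = (\<omega> \<in> a' \<inter> A)" by blast
      have "space ?H - a' \<in> sets ?H" using a'(1) by (rule sets.compl_sets)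
      then have "?\<Omega> - a' \<in> sets ?H" by (simp only: spH)
      moreover have "AE \<omega> in ?P. (\<omega> \<in> (?\<Omega> - a) \<inter> A) = (\<omega> \<in> (?\<Omega> - a') \<inter> A)"
        using a'(2) A0 by (auto elim!: eventually_mono)
      ultimately show ?case by blast
    next
      case (Union a)
      then have "\<forall>i. \<exists>b. b \<in> sets ?H \<and> (AE \<omega> in ?P. (\<omega> \<in> a i \<inter> A) = (\<omega> \<in> b \<inter> A))" by blast
      then obtain b where b': "\<forall>i. b i \<in> sets ?H \<and> (AE \<omega> in ?P. (\<omega> \<in> a i \<inter> A) = (\<omega> \<in> b i \<inter> A))"
        by (rule choice[THEN exE])
      then have b: "\<And>i. b i \<in> sets ?H" "\<And>i. AE \<omega> in ?P. (\<omega> \<in> a i \<inter> A) = (\<omega> \<in> b i \<inter> A)"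
        by blast+
      have "(\<Union>i. b i) \<in> sets ?H" using b(1) by blast
      moreover have "AE \<omega> in ?P. \<forall>i. (\<omega> \<in> a i \<inter> A) = (\<omega> \<in> b i \<inter> A)"
        using b(2) by (simp add: AE_all_countable)
      then have "AE \<omega> in ?P. (\<omega> \<in> (\<Union>i. a i) \<inter> A) = (\<omega> \<in> (\<Union>i. b i) \<inter> A)"
        by (auto elim!: eventually_mono)
      ultimately show ?case by blast
    qed
  qed
  interpret core P0 ?H K ?F A
    by (intro core.intro kern_axioms core_axioms.intro Fsub AF AP trace lift)
  show ?thesis by (rule gen_core[OF \<xi>])
qed




theorem mainTheorem2:
  fixes P0 :: "'w::polish_space measure"
    and T :: "nat \<Rightarrow> 'w \<Rightarrow> ennreal"
    and Z :: "nat \<Rightarrow> 'w \<Rightarrow> 'e::polish_space"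
    and K :: "'w \<Rightarrow> 'w measure"
    and \<xi> :: "'w \<Rightarrow> real"
    and M I :: "nat set" and t :: real
  assumes P0: "prob_space P0" and P0_borel: "sets P0 = sets borel"
    and T_meas: "\<And>i. T i \<in> borel_measurable P0"
    and Z_meas: "\<And>i. Z i \<in> borel_measurable P0"
    and Z_pair: "\<And>i. 1 \<le> i \<Longrightarrow> Z (2*i-1) = Z (2*i)"
    and T_le: "\<And>i \<omega>. 1 \<le> i \<Longrightarrow> \<omega> \<in> space P0 \<Longrightarrow> T (2*i-1) \<omega> \<le> T (2*i) \<omega>"
    and T_less: "\<And>i \<omega>. 1 \<le> i \<Longrightarrow> \<omega> \<in> space P0 \<Longrightarrow> T (2*i) \<omega> < \<infinity> \<Longrightarrow> T (2*i-1) \<omega> < T (2*i) \<omega>"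
    and finite_count: "\<And>s::real. 0 \<le> s \<Longrightarrow>
        (\<integral>\<^sup>+\<omega>. (\<Sum>i. indicator {\<omega>. T (Suc i) \<omega> \<le> ennreal s} \<omega>) \<partial>P0) < \<infinity>"
    and M: "M \<in> idxM" and I: "I \<in> idxN"
    and K: "regular_cond_prob P0 (ZM_RI T Z M I) (ZM_RI_space M I) K"
    and \<xi>: "\<xi> \<in> borel_measurable P0" "integrable (completion P0) \<xi>"
  shows
    "(0 \<le> t \<longrightarrow> (AE \<omega> in completion P0.
        indicator (AM P0 T M t) \<omega> * real_cond_exp (completion P0) (G_RI (completion P0) T Z I t) \<xi> \<omega>
        = indicator (AM P0 T M t) \<omega> *
          ((\<integral>x. \<xi> x * indicator (AM P0 T M t) x \<partial>K \<omega>) / measure (K \<omega>) (AM P0 T M t))))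
     \<and> (0 < t \<longrightarrow> (AE \<omega> in completion P0.
        indicator (AMm P0 T M t) \<omega> * real_cond_exp (completion P0) (Gm_RI (completion P0) T Z I t) \<xi> \<omega>
        = indicator (AMm P0 T M t) \<omega> *
          ((\<integral>x. \<xi> x * indicator (AMm P0 T M t) x \<partial>K \<omega>) / measure (K \<omega>) (AMm P0 T M t))))"
proof (intro conjI impI)
  let ?P = "completion P0"
  have G1: "G_RI ?P T Z I t = sigma (space P0) (Gt_gen ?P T Z t \<union> null_sets ?P \<union> sets (vimage_algebra (space P0) (RI T Z I) (RI_space I)))"
    by (simp add: G_RI_def sigmaRV_def)
  have G2: "Gm_RI ?P T Z I t = sigma (space P0) (Gtm_gen ?P T Z t \<union> null_sets ?P \<union> sets (vimage_algebra (space P0) (RI T Z I) (RI_space I)))"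
    by (simp add: Gm_RI_def sigmaRV_def)
  have [measurable]: "\<And>i. T i \<in> borel_measurable P0" by (rule T_meas)
  show "AE \<omega> in ?P.
        indicator (AM P0 T M t) \<omega> * real_cond_exp ?P (G_RI ?P T Z I t) \<xi> \<omega>
        = indicator (AM P0 T M t) \<omega> *
          ((\<integral>x. \<xi> x * indicator (AM P0 T M t) x \<partial>K \<omega>) / measure (K \<omega>) (AM P0 T M t))"
    unfolding G1
  proof (rule generic[OF P0 T_meas Z_meas Z_pair M I K \<xi>,
        where act = "\<lambda>i \<omega>. T i \<omega> \<le> ennreal t \<and> ennreal t < T (i+1) \<omega>"
          and act' = "\<lambda>k \<omega>. T (2*k-1) \<omega> \<le> ennreal t \<and> ennreal t < T (2*k) \<omega>"])
    show "\<And>i. Measurable.pred P0 (\<lambda>\<omega>. T i \<omega> \<le> ennreal t \<and> ennreal t < T (i+1) \<omega>)" by measurable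
    show "\<And>k \<omega>. 1 \<le> k \<Longrightarrow> (T (2*k-1) \<omega> \<le> ennreal t \<and> ennreal t < T (2*k) \<omega>) = (T (2*k-1) \<omega> \<le> ennreal t \<and> ennreal t < T (2*k-1+1) \<omega>)"
      by simp
    show "Gt_gen ?P T Z t = {{\<omega> \<in> space P0. (T (2*k-1) \<omega> \<le> ennreal t \<and> ennreal t < T (2*k) \<omega>) \<and> Z (2*k) \<omega> \<in> B} | k B. 1 \<le> k \<and> B \<in> sets (borel :: 'e measure)}"
      by (simp add: Gt_gen_def conj_assoc)
    show "AM P0 T M t = {\<omega> \<in> space P0. (\<forall>i\<in>M. T i \<omega> \<le> ennreal t \<and> ennreal t < T (i+1) \<omega>) \<and> (\<forall>i. odd i \<and> i \<notin> M \<longrightarrow> \<not> (T i \<omega> \<le> ennreal t \<and> ennreal t < T (i+1) \<omega>))}"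
      by (simp add: AM_def)
  qed
  show "AE \<omega> in ?P.
        indicator (AMm P0 T M t) \<omega> * real_cond_exp ?P (Gm_RI ?P T Z I t) \<xi> \<omega>
        = indicator (AMm P0 T M t) \<omega> *
          ((\<integral>x. \<xi> x * indicator (AMm P0 T M t) x \<partial>K \<omega>) / measure (K \<omega>) (AMm P0 T M t))"
    unfolding G2
  proof (rule generic[OF P0 T_meas Z_meas Z_pair M I K \<xi>,
        where act = "\<lambda>i \<omega>. T i \<omega> < ennreal t \<and> ennreal t \<le> T (i+1) \<omega>"
          and act' = "\<lambda>k \<omega>. T (2*k-1) \<omega> < ennreal t \<and> ennreal t \<le> T (2*k) \<omega>"])
    show "\<And>i. Measurable.pred P0 (\<lambda>\<omega>. T i \<omega> < ennreal t \<and> ennreal t \<le> T (i+1) \<omega>)" by measurable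
    show "\<And>k \<omega>. 1 \<le> k \<Longrightarrow> (T (2*k-1) \<omega> < ennreal t \<and> ennreal t \<le> T (2*k) \<omega>) = (T (2*k-1) \<omega> < ennreal t \<and> ennreal t \<le> T (2*k-1+1) \<omega>)"
      by simp
    show "Gtm_gen ?P T Z t = {{\<omega> \<in> space P0. (T (2*k-1) \<omega> < ennreal t \<and> ennreal t \<le> T (2*k) \<omega>) \<and> Z (2*k) \<omega> \<in> B} | k B. 1 \<le> k \<and> B \<in> sets (borel :: 'e measure)}"
      by (simp add: Gtm_gen_def conj_assoc)
    show "AMm P0 T M t = {\<omega> \<in> space P0. (\<forall>i\<in>M. T i \<omega> < ennreal t \<and> ennreal t \<le> T (i+1) \<omega>) \<and> (\<forall>i. odd i \<and> i \<notin> M \<longrightarrow> \<not> (T i \<omega> < ennreal t \<and> ennreal t \<le> T (i+1) \<omega>))}"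
      by (simp add: AMm_def)
  qed
qed



end
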